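(* Consider $n\in\mathbb{N}$ users whose states $x^i_t\in\{0,1\}$ ($i\in\{1,\dots,n\}$, $t\in\mathbb{N}$) evolve under the controlled dynamics and strategies described in the context, and let $m_t=\frac1n\sum_{i=1}^n \mathbb{1}(x^i_t=1)$. For every $t\in\mathbb{N}$, every realization $m_{1:t}\in\mathcal{M}^t$ of the mean-field history, and all reserve and demand actions $g^r_{1:t}\in(\{1,\dots,k\})^t$, $g^d_{1:t}\in(\{1,\dots,k\})^t$, $$\mathbb{P}(m_{t+1}\mid m_{1:t},g^r_{1:t},g^d_{1:t})=\mathbb{P}(m_{t+1}\mid m_t,g^r_t,g^d_t),$$ i.e. the mean-field process is a controlled Markov process under the reserve and demand actions.
   Context: Fix $n\in\mathbb{N}$ users, a demand probability $p\in(0,1)$, and $k\in\mathbb{N}$ options $\{1,\dots,k\}$. Each option $u$ has a participation rate $\alpha(u)\in[0,1]$ and a delivery rate $q(u,m)\in(0,1]$ depending also on $m\in\mathcal{M}:=\{0,\frac1n,\frac2n,\dots,1\}$. User $i$ has state $x^i_t\in\{0,1\}$ ($1$ = has a demand). The mean-field is $m_t=\frac1n\sum_{i=1}^n\mathbb{1}(x^i_t=1)\in\mathcal{M}$. Given the option $u^i_t$ assigned to user $i$ and $m_t$, the user's next state has transition probabilities $\mathbb{P}(x^i_{t+1}=1\mid x^i_t=0,u^i_t,m_t)=(1-\alpha(u^i_t))p$, $\mathbb{P}(x^i_{t+1}=0\mid x^i_t=0,u^i_t,m_t)=1-(1-\alpha(u^i_t))p$, $\mathbb{P}(x^i_{t+1}=0\mid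 x^i_t=1,u^i_t,m_t)=q(u^i_t,m_t)$, $\mathbb{P}(x^i_{t+1}=1\mid x^i_t=1,u^i_t,m_t)=1-q(u^i_t,m_t)$; conditionally on the current joint states and actions, the users' transitions are mutually independent. Admissible control laws have the form $u^i_t=g_t(x^i_t,m_{1:t})$ with $g_t:\{0,1\}\times\mathcal{M}^t\to\{1,\dots,k\}$ (the same for all users). The reserve action is $g^r_t:=g_t(0,m_{1:t})$ and the demand action is $g^d_t:=g_t(1,m_{1:t})$, so $u^i_t=\mathbb{1}(x^i_t=0)g^r_t+\mathbb{1}(x^i_t=1)g^d_t$. *)

theory Defs
  imports "HOL-Probability.Probability"
begin

text \<open>Joint state of the n users: a bool list of length n (True = has a demand).\<close>

definition mean_field :: "nat \<Rightarrow> bool list \<Rightarrow> real" where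
  "mean_field n xs = real (length (filter id xs)) / real n"

definition MF_space :: "nat \<Rightarrow> real set" where
  "MF_space n = {real j / real n | j. j \<le> n}"

fun indep_list :: "'a pmf list \<Rightarrow> 'a list pmf" where
  "indep_list [] = return_pmf []"
| "indep_list (P # Ps) = bind_pmf P (\<lambda>b. map_pmf (\<lambda>bs. b # bs) (indep_list Ps))"

definition next_state ::
  "nat \<Rightarrow> real \<Rightarrow> (nat \<Rightarrow> real) \<Rightarrow> (nat \<Rightarrow> real \<Rightarrow> real) \<Rightarrow> nat \<Rightarrow> nat \<Rightarrow> bool list \<Rightarrow> bool list pmf" where
  "next_state n p alpha q ar ad x =
     (let m = mean_field n x in
      indep_list (map (\<lambda>b. if b then bernoulli_pmf (1 - q ad m)
                                 else bernoulli_pmf ((1 - alpha ar) * p)) x))"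

text \<open>Law of the state trajectory [x_1, ..., x_(t+1)] under the control law g,
  where g s b h is the action at time s (1-based) for a user in state b given the
  mean-field history h = [m_1, ..., m_s].\<close>
fun traj ::
  "nat \<Rightarrow> real \<Rightarrow> (nat \<Rightarrow> real) \<Rightarrow> (nat \<Rightarrow> real \<Rightarrow> real) \<Rightarrow> bool list pmf
   \<Rightarrow> (nat \<Rightarrow> bool \<Rightarrow> real list \<Rightarrow> nat) \<Rightarrow> nat \<Rightarrow> bool list list pmf" where
  "traj n p alpha q init g 0 = map_pmf (\<lambda>x. [x]) init"
| "traj n p alpha q init g (Suc t) =
     bind_pmf (traj n p alpha q init g t) (\<lambda>xs.
       (let s = length xs; h = map (mean_field n) xs in
        map_pmf (\<lambda>x'. xs @ [x'])
          (next_state n p alpha q (g s False h) (g s True h) (last xs))))"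

definition cond_prob :: "'a pmf \<Rightarrow> 'a set \<Rightarrow> 'a set \<Rightarrow> real" where
  "cond_prob P C A = measure_pmf.prob P (C \<inter> A) / measure_pmf.prob P A"

end

theory Submission
  imports Defs
begin


lemma prob_bind_pmf_int:
  "measure_pmf.prob (bind_pmf M K) X = (\<integral>x. measure_pmf.prob (K x) X \<partial>M)"
  unfolding measure_pmf_bind
  by (subst measure_pmf.measure_bind[where N="count_space UNIV"]) (auto intro: measurable_measure_pmf prob_space_imp_subprob_space measure_pmf.prob_space_axioms simp: space_subprob_algebra)

lemma key:
  fixes M :: "'a pmf" and K :: "'a \<Rightarrow> 'b pmf"
  assumes A: "\<And>x y. x \<in> set_pmf M \<Longrightarrow> y \<in> set_pmf (K x) \<Longrightarrow> (y \<in> A \<longleftrightarrow> Q x)"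
    and C: "\<And>x. x \<in> set_pmf M \<Longrightarrow> Q x \<Longrightarrow> measure_pmf.prob (K x) C = c"
    and P: "measure_pmf.prob M {x. Q x} > 0"
  shows "cond_prob (bind_pmf M K) C A = c"
proof -
  have 1: "measure_pmf.prob (K x) (C \<inter> A) = (if Q x then c else 0)" if x: "x \<in> set_pmf M" for x
  proof -
    have "measure_pmf.prob (K x) (C \<inter> A) = measure_pmf.prob (K x) ((C \<inter> A) \<inter> set_pmf (K x))"
      by (simp add: measure_Int_set_pmf)
    also have "(C \<inter> A) \<inter> set_pmf (K x) = (if Q x then C \<inter> set_pmf (K x) else {})"
      using A[OF x] by auto
    also have "measure_pmf.prob (K x) \<dots> = (if Q x then c else 0)"
      using C[OF x] by (auto simp: measure_Int_set_pmf)
    finally show ?thesis .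
  qed
  have 2: "measure_pmf.prob (K x) A = (if Q x then 1 else 0)" if x: "x \<in> set_pmf M" for x
  proof -
    have "measure_pmf.prob (K x) A = measure_pmf.prob (K x) (A \<inter> set_pmf (K x))"
      by (simp add: measure_Int_set_pmf)
    also have "A \<inter> set_pmf (K x) = (if Q x then set_pmf (K x) else {})"
      using A[OF x] by auto
    also have "measure_pmf.prob (K x) \<dots> = (if Q x then 1 else 0)"
      by (auto simp: measure_pmf.prob_eq_1 AE_measure_pmf_iff)
    finally show ?thesis .
  qed
  have e1: "measure_pmf.prob (bind_pmf M K) (C \<inter> A) = (\<integral>x. c * indicator {x. Q x} x \<partial>M)"
    unfolding prob_bind_pmf_int
    by (intro integral_cong_AE) (auto simp: AE_measure_pmf_iff 1)
  have e2: "measure_pmf.prob (bind_pmf M K) A = (\<integral>x. indicator {x. Q x} x \<partial>M)"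
    unfolding prob_bind_pmf_int
    by (intro integral_cong_AE) (auto simp: AE_measure_pmf_iff 2)
  show ?thesis unfolding cond_prob_def e1 e2 using P by simp
qed

lemma key0:
  fixes M :: "'a pmf" and K :: "'a \<Rightarrow> 'b pmf"
  assumes A: "\<And>x y. x \<in> set_pmf M \<Longrightarrow> y \<in> set_pmf (K x) \<Longrightarrow> (y \<in> A \<longleftrightarrow> Q x)"
  shows "measure_pmf.prob (bind_pmf M K) A = measure_pmf.prob M {x. Q x}"
proof -
  have 2: "measure_pmf.prob (K x) A = indicator {x. Q x} x" if x: "x \<in> set_pmf M" for x
  proof -
    have "measure_pmf.prob (K x) A = measure_pmf.prob (K x) (A \<inter> set_pmf (K x))"
      by (simp add: measure_Int_set_pmf)
    also have "A \<inter> set_pmf (K x) = (if Q x then set_pmf (K x) else {})"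
      using A[OF x] by auto
    also have "measure_pmf.prob (K x) \<dots> = indicator {x. Q x} x"
      by (auto simp: measure_pmf.prob_eq_1 AE_measure_pmf_iff)
    finally show ?thesis .
  qed
  show ?thesis
    unfolding prob_bind_pmf_int
    by (subst integral_cong_AE[where g="indicator {x. Q x}"]) (auto simp: AE_measure_pmf_iff 2)
qed

lemma indep_list_len: "y \<in> set_pmf (indep_list Ps) \<Longrightarrow> length y = length Ps"
  by (induction Ps arbitrary: y) auto

lemma traj_support:
  assumes "\<And>x. x \<in> set_pmf init \<Longrightarrow> length x = n"
  shows "xs \<in> set_pmf (traj n p alpha q init g t) \<Longrightarrow> length xs = Suc t \<and> (\<forall>x\<in>set xs. length x = n)"
proof (induction t arbitrary: xs)
  case 0
  then show ?case using assms by auto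
next
  case (Suc t)
  then obtain ys y where ys: "ys \<in> set_pmf (traj n p alpha q init g t)" and xs: "xs = ys @ [y]"
    and y: "y \<in> set_pmf (next_state n p alpha q (g (length ys) False (map (mean_field n) ys))
               (g (length ys) True (map (mean_field n) ys)) (last ys))"
    by (auto simp: Let_def)
  from Suc.IH[OF ys] have "length ys = Suc t" "\<forall>x\<in>set ys. length x = n" by auto
  moreover have "last ys \<in> set ys" using \<open>length ys = Suc t\<close> by (intro last_in_set) auto
  moreover have "length y = length (last ys)"
    using y by (auto simp: next_state_def Let_def dest!: indep_list_len)
  ultimately show ?case using xs by auto
qed

fun Dcnt :: "bool pmf \<Rightarrow> nat \<Rightarrow> nat pmf" where
  "Dcnt P 0 = return_pmf 0"
| "Dcnt P (Suc a) = bind_pmf P (\<lambda>c. map_pmf (\<lambda>k. k + of_bool c) (Dcnt P a))"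

lemma cnt_indep:
  "map_pmf (\<lambda>l. length (filter id l)) (indep_list (map (\<lambda>b. if b then P1 else P0) x)) =
   bind_pmf (Dcnt P1 (length (filter id x))) (\<lambda>i. map_pmf (\<lambda>j. i + j) (Dcnt P0 (length (filter Not x))))"
proof (induction x)
  case Nil
  then show ?case by (simp add: bind_return_pmf)
next
  case (Cons a x)
  have e: "map_pmf (\<lambda>l. length (filter id l)) (indep_list (map (\<lambda>b. if b then P1 else P0) (a # x)))
     = bind_pmf (if a then P1 else P0) (\<lambda>c. map_pmf (\<lambda>k. k + of_bool c)
          (map_pmf (\<lambda>l. length (filter id l)) (indep_list (map (\<lambda>b. if b then P1 else P0) x))))"
    by (simp add: map_bind_pmf map_pmf_comp) (auto intro!: bind_pmf_cong map_pmf_cong)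
  show ?case
  proof (cases a)
    case True
    show ?thesis unfolding e Cons.IH using True
      by (simp add: map_pmf_def bind_assoc_pmf bind_return_pmf add_ac id_def)
  next
    case False
    show ?thesis unfolding e Cons.IH using False
      by (simp add: map_pmf_def bind_assoc_pmf bind_return_pmf add_ac id_def)
         (subst bind_commute_pmf, simp add: add_ac)
  qed
qed

lemma L1:
  assumes "n \<ge> 1" "length x1 = length x2" "mean_field n x1 = mean_field n x2"
  shows "map_pmf (mean_field n) (next_state n p alpha q ar ad x1) =
         map_pmf (mean_field n) (next_state n p alpha q ar ad x2)"
proof -
  have c1: "length (filter id x1) = length (filter id x2)"
    using assms unfolding mean_field_def by (auto simp: field_simps)
  have c2: "length (filter Not x1) = length (filter Not x2)"
    using sum_length_filter_compl[of id x1] sum_length_filter_compl[of id x2] c1 assms(2)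
    by (simp add: comp_def)
  have mf: "map_pmf (mean_field n) M = map_pmf (\<lambda>k. real k / real n) (map_pmf (\<lambda>l. length (filter id l)) M)"
    for M by (simp add: map_pmf_comp mean_field_def[abs_def])
  show ?thesis
    unfolding next_state_def Let_def mf cnt_indep c1 c2 assms(3) ..
qed

theorem theorem1:
  fixes n k :: nat and p :: real
    and alpha :: "nat \<Rightarrow> real" and q :: "nat \<Rightarrow> real \<Rightarrow> real"
    and init :: "bool list pmf"
    and g :: "nat \<Rightarrow> bool \<Rightarrow> real list \<Rightarrow> nat"
    and t :: nat and h :: "real list" and gr gd :: "nat \<Rightarrow> nat" and m' :: real
  assumes n_pos: "n \<ge> 1" and k_pos: "k \<ge> 1"
    and p_range: "0 < p" "p < 1"
    and alpha_range: "\<And>u. u \<in> {1..k} \<Longrightarrow> 0 \<le> alpha u \<and> alpha u \<le> 1"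
    and q_range: "\<And>u m. u \<in> {1..k} \<Longrightarrow> m \<in> MF_space n \<Longrightarrow> 0 < q u m \<and> q u m \<le> 1"
    and init_len: "\<And>x. x \<in> set_pmf init \<Longrightarrow> length x = n"
    and g_range: "\<And>s b hh. g s b hh \<in> {1..k}"
    and t_pos: "t \<ge> 1"
    and h_len: "length h = t" and h_range: "set h \<subseteq> MF_space n"
    and gr_range: "\<And>s. gr s \<in> {1..k}" and gd_range: "\<And>s. gd s \<in> {1..k}"
    and pos: "measure_pmf.prob (traj n p alpha q init g t)
               {xs. take t (map (mean_field n) xs) = h \<and>
                    (\<forall>s\<in>{1..t}. g s False (take s (map (mean_field n) xs)) = gr s \<and>
                                g s True (take s (map (mean_field n) xs)) = gd s)} > 0"
  shows "cond_prob (traj n p alpha q init g t)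
           {xs. map (mean_field n) xs ! t = m'}
           {xs. take t (map (mean_field n) xs) = h \<and>
                (\<forall>s\<in>{1..t}. g s False (take s (map (mean_field n) xs)) = gr s \<and>
                            g s True (take s (map (mean_field n) xs)) = gd s)}
       = cond_prob (traj n p alpha q init g t)
           {xs. map (mean_field n) xs ! t = m'}
           {xs. map (mean_field n) xs ! (t - 1) = last h \<and>
                g t False (take t (map (mean_field n) xs)) = gr t \<and>
                g t True (take t (map (mean_field n) xs)) = gd t}"
proof -
  obtain t0 where t0: "t = Suc t0" using t_pos by (cases t) auto
  define mf where "mf = mean_field n"
  define M where "M = traj n p alpha q init g t0"
  define K where "K = (\<lambda>xs. map_pmf (\<lambda>x'. xs @ [x'])
          (next_state n p alpha q (g (length xs) False (map mf xs)) (g (length xs) True (map mf xs)) (last xs)))"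
  have T: "traj n p alpha q init g t = bind_pmf M K"
    by (simp add: t0 M_def K_def mf_def Let_def)
  define Q1 where "Q1 = (\<lambda>xs. take t (map mf xs) = h \<and>
                (\<forall>s\<in>{1..t}. g s False (take s (map mf xs)) = gr s \<and> g s True (take s (map mf xs)) = gd s))"
  define Q2 where "Q2 = (\<lambda>xs. map mf xs ! (t - 1) = last h \<and>
                g t False (take t (map mf xs)) = gr t \<and> g t True (take t (map mf xs)) = gd t)"
  define A1 where "A1 = {xs. take t (map (mean_field n) xs) = h \<and>
                (\<forall>s\<in>{1..t}. g s False (take s (map (mean_field n) xs)) = gr s \<and>
                            g s True (take s (map (mean_field n) xs)) = gd s)}"
  define A2 where "A2 = {xs. map (mean_field n) xs ! (t - 1) = last h \<and>
                g t False (take t (map (mean_field n) xs)) = gr t \<and>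
                g t True (take t (map (mean_field n) xs)) = gd t}"
  define C where "C = {xs. map (mean_field n) xs ! t = m'}"
  have supp: "length xs = t \<and> (\<forall>x\<in>set xs. length x = n)" if "xs \<in> set_pmf M" for xs
    using traj_support[OF init_len that[unfolded M_def]] t0 by auto
  have suppK: "\<exists>y. ys = xs @ [y]" if "ys \<in> set_pmf (K xs)" for xs ys
    using that by (auto simp: K_def)
  have hA1: "y \<in> A1 \<longleftrightarrow> Q1 x" if hx: "x \<in> set_pmf M" and hy: "y \<in> set_pmf (K x)" for x y
  proof -
    obtain z where y: "y = x @ [z]" using suppK[OF hy] by auto
    have l: "length x = t" using supp[OF hx] by auto
    have "take s (map mf y) = take s (map mf x)" if "s \<le> t" for s
      using that l by (simp add: y)
    then show ?thesis unfolding A1_def Q1_def mf_def by auto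
  qed
  have hA2: "y \<in> A2 \<longleftrightarrow> Q2 x" if hx: "x \<in> set_pmf M" and hy: "y \<in> set_pmf (K x)" for x y
  proof -
    obtain z where y: "y = x @ [z]" using suppK[OF hy] by auto
    have l: "length x = t" using supp[OF hx] by auto
    have "take t (map mf y) = take t (map mf x)" "map mf y ! (t - 1) = map mf x ! (t - 1)"
      using l t_pos by (simp_all add: y nth_append)
    then show ?thesis unfolding A2_def Q2_def mf_def by auto
  qed
  have P1: "measure_pmf.prob M {x. Q1 x} > 0"
    using pos key0[of M K A1 Q1, OF hA1] unfolding T A1_def by simp
  have Q12: "Q2 x" if "x \<in> set_pmf M" "Q1 x" for x
  proof -
    have l: "length x = t" using supp[OF that(1)] by auto
    have "map mf x = h" using that(2) l unfolding Q1_def by simp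
    moreover have "map mf x \<noteq> []" using l t_pos by auto
    moreover have "g t False (take t (map mf x)) = gr t \<and> g t True (take t (map mf x)) = gd t"
      using that(2) t_pos unfolding Q1_def by auto
    ultimately show ?thesis using l t_pos h_len unfolding Q2_def
      by (simp add: last_conv_nth)
  qed
  have P2: "measure_pmf.prob M {x. Q2 x} > 0"
  proof -
    have "measure_pmf.prob M {x. Q1 x} = measure_pmf.prob M ({x. Q1 x} \<inter> set_pmf M)"
      by (simp add: measure_Int_set_pmf)
    also have "\<dots> \<le> measure_pmf.prob M {x. Q2 x}"
      using Q12 by (intro measure_pmf.finite_measure_mono) auto
    finally show ?thesis using P1 by simp
  qed
  obtain xs1 where xs1: "xs1 \<in> set_pmf M" "Q1 xs1"
  proof -
    have "{x. Q1 x} \<inter> set_pmf M \<noteq> {}"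
    proof
      assume "{x. Q1 x} \<inter> set_pmf M = {}"
      then have "measure_pmf.prob M {x. Q1 x} = 0"
        by (metis measure_Int_set_pmf measure_empty)
      then show False using P1 by simp
    qed
    then show ?thesis using that by auto
  qed
  define x0 where "x0 = last xs1"
  have x0len: "length x0 = n" "mf x0 = last h"
  proof -
    have l: "length xs1 = t" "\<forall>x\<in>set xs1. length x = n" using supp[OF xs1(1)] by auto
    then have "x0 \<in> set xs1" unfolding x0_def using t_pos by (intro last_in_set) auto
    then show "length x0 = n" using l by auto
    have "map mf xs1 = h" using xs1(2) l unfolding Q1_def by simp
    then show "mf x0 = last h" unfolding x0_def using l t_pos
      by (metis last_map list.map_disc_iff list.size(3) not_one_le_zero)
  qed
  define c where "c = measure_pmf.prob (map_pmf mf (next_state n p alpha q (gr t) (gd t) x0)) {m'}"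
  have hC: "measure_pmf.prob (K x) C = c" if "x \<in> set_pmf M" "Q2 x" for x
  proof -
    have l: "length x = t" "\<forall>y\<in>set x. length y = n" using supp[OF that(1)] by auto
    have lx: "last x \<in> set x" using l t_pos by (intro last_in_set) auto
    have tk: "take t (map mf x) = map mf x" using l by simp
    have acts: "g (length x) False (map mf x) = gr t" "g (length x) True (map mf x) = gd t"
      using that(2) l tk unfolding Q2_def by auto
    have mlast: "mf (last x) = last h"
      using that(2) l t_pos unfolding Q2_def
      by (metis One_nat_def diff_less last_conv_nth le_numeral_extra(2) length_0_conv
           length_map less_numeral_extra(1) nth_map less_le_trans)
    have "measure_pmf.prob (K x) C =
        measure_pmf.prob (map_pmf mf (next_state n p alpha q (gr t) (gd t) (last x))) {m'}"
      unfolding K_def acts C_def measure_map_pmf using l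
      by (intro arg_cong2[where f="measure_pmf.prob"]) (auto simp: nth_append mf_def)
    also have "\<dots> = c" unfolding c_def mf_def
      using L1[OF n_pos, of "last x" x0 p alpha q "gr t" "gd t"] lx l x0len mlast
      by (simp add: mf_def)
    finally show ?thesis .
  qed
  have "cond_prob (bind_pmf M K) C A1 = c"
    by (rule key[OF hA1 _ P1]) (auto intro: hC Q12)
  moreover have "cond_prob (bind_pmf M K) C A2 = c"
    by (rule key[OF hA2 hC P2])
  ultimately show ?thesis unfolding T[symmetric] A1_def A2_def C_def by simp
qed

end
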